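(* Assume the Setting and consider Algorithm 2 with $0<\mu_0<4\sigma(1-\eta)$. (i) If $F(x_n)=y$ for some $n\ge0$, then $x_m=x_n$ for all $m>n$. (ii) If $\xi_{n+1}=\xi_n$ for some $n\ge0$, then $F(x_n)=y$, and $x_m=x_n$ and $\xi_m=\xi_n$ for all $m>n$.
   Context: Setting. Let $X,Y$ be real Hilbert spaces. Let $\mathcal R:X\to(-\infty,\infty]$ be proper, lower semicontinuous and strongly convex with constant $\sigma>0$, i.e. $\mathcal R(t\bar x+(1-t)x)+\sigma t(1-t)\|\bar x-x\|^2\le t\mathcal R(\bar x)+(1-t)\mathcal R(x)$ for all $\bar x,x\in\mathrm{dom}(\mathcal R)$ and $t\in[0,1]$. For $\xi\in\partial\mathcal R(x)$ (subdifferential) the Bregman distance is $D_{\mathcal R}^{\xi}(z,x)=\mathcal R(z)-\mathcal R(x)-\langle\xi,z-x\rangle$. The convex conjugate $\mathcal R^*$ is differentiable with $\|\nabla\mathcal R^*(\bar\xi)-\nabla\mathcal R^*(\xi)\|\le\|\bar\xi-\xi\|/(2\sigma)$, and $\nabla\mathcal R^*(\xi)=\arg\min_{x\in X}\{\mathcal R(x)-\langle\xi,x\rangle\}$ (unique minimizer), with $\xi\in\partial\mathcal R(\nabla\mathcal R^*(\xi))$. Let $F:\mathrm{dom}(F)\subset X\to Y$ and $y\in Y$. Assume: (b) there are $\rho>0$, $x_0\in X$, $\xi_0\in\partial\mathcal R(x_0)$ with $B_{2\rho}(x_0):=\{x:\|x-x_0\|\le 2\rho\}\subset\mathrm{dom}(F)$,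 and $F(x)=y$ has a solution $\bar x$ with $D_{\mathcal R}^{\xi_0}(\bar x,x_0)\le\sigma\rho^2$; (c) $F$ is weakly closed: if $x_n\in\mathrm{dom}(F)$, $x_n\rightharpoonup x$ and $F(x_n)\to v$, then $x\in\mathrm{dom}(F)$ and $F(x)=v$; (d) there are bounded linear operators $L(x):X\to Y$, $x\in B_{2\rho}(x_0)$, with $x\mapsto L(x)$ continuous on $B_{2\rho}(x_0)$, a constant $\eta\in[0,1)$ with $\|F(x)-F(\bar x)-L(\bar x)(x-\bar x)\|\le\eta\|F(x)-F(\bar x)\|$ for all $x,\bar x\in B_{2\rho}(x_0)$, and a constant $L>0$ with $\|L(x)\|\le L$ on $B_{2\rho}(x_0)$. Algorithm 2 (exact data $y$). Parameters: $\beta\in(0,\infty]$, $\mu_0>0$, $\mu_1>0$, and a fixed choice of step-size rule: (constant) $\alpha_n=\mu_0/L^2$, or (adaptive) $\alpha_n=\min\{\mu_0\|r_n\|^2/\|g_n\|^2,\mu_1\}$ if $r_n\ne0$ and $\alpha_n=0$ if $r_n=0$ (with $\mu_0\|r_n\|^2/\|g_n\|^2:=+\infty$ if $g_n=0$). Set $\xi_{-1}=\xi_0$, $x_0=\nabla\mathcal R^*(\xi_0)$. For all $n\ge0$ (no stopping): $r_n:=F(x_n)-y$, $g_n:=L(x_n)^*r_n$, $\alpha_n$ by the chosen rule; $m_n:=\xi_n-\xi_{n-1}$; $\tilde\gamma_0:=0$ and for $n\ge1$, $\tilde\gamma_n:=\langle m_n,x_n-x_{n-1}\rangle-(1-\eta)\alpha_{n-1}\|r_{n-1}\|^2+\beta_{n-1}\tilde\gamma_{n-1}$;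 $\beta_n:=\min\{\max\{0,(\alpha_n\langle g_n,m_n\rangle-2\sigma\tilde\gamma_n)/\|m_n\|^2\},\beta\}$ if $m_n\ne0$ and $\beta_n:=0$ if $m_n=0$; $\xi_{n+1}:=\xi_n-\alpha_ng_n+\beta_nm_n$, $x_{n+1}:=\nabla\mathcal R^*(\xi_{n+1})$. *)

theory Defs
  imports "HOL-Analysis.Analysis"
begin

definition proper_fun :: "('a \<Rightarrow> ereal) \<Rightarrow> bool" where
  "proper_fun R \<longleftrightarrow> (\<forall>x. R x \<noteq> -\<infinity>) \<and> (\<exists>x. R x \<noteq> \<infinity>)"

definition effdom :: "('a \<Rightarrow> ereal) \<Rightarrow> 'a set" where
  "effdom R = {x. R x < \<infinity>}"

definition lsc_fun :: "('a::topological_space \<Rightarrow> ereal) \<Rightarrow> bool" where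
  "lsc_fun R \<longleftrightarrow> (\<forall>c::ereal. closed {x. R x \<le> c})"

definition strongly_convex :: "('a::real_normed_vector \<Rightarrow> ereal) \<Rightarrow> real \<Rightarrow> bool" where
  "strongly_convex R \<sigma> \<longleftrightarrow>
     (\<forall>xb\<in>effdom R. \<forall>x\<in>effdom R. \<forall>t\<in>{0..1::real}.
        R (t *\<^sub>R xb + (1 - t) *\<^sub>R x) + ereal (\<sigma> * t * (1 - t) * (norm (xb - x))\<^sup>2)
          \<le> ereal t * R xb + ereal (1 - t) * R x)"

definition subdiff :: "('a::real_inner \<Rightarrow> ereal) \<Rightarrow> 'a \<Rightarrow> 'a set" where
  "subdiff R x = {\<xi>. R x \<noteq> \<infinity> \<and> R x \<noteq> -\<infinity> \<and>
                      (\<forall>z. R x + ereal (\<xi> \<bullet> (z - x)) \<le> R z)}"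

definition bregman :: "('a::real_inner \<Rightarrow> ereal) \<Rightarrow> 'a \<Rightarrow> 'a \<Rightarrow> 'a \<Rightarrow> ereal" where
  "bregman R \<xi> z x = R z - R x - ereal (\<xi> \<bullet> (z - x))"

definition grad_conj :: "('a::real_inner \<Rightarrow> ereal) \<Rightarrow> 'a \<Rightarrow> 'a" where
  "grad_conj R \<xi> = (THE x. \<forall>w. R x - ereal (\<xi> \<bullet> x) \<le> R w - ereal (\<xi> \<bullet> w))"

definition weak_conv :: "(nat \<Rightarrow> 'a::real_inner) \<Rightarrow> 'a \<Rightarrow> bool" where
  "weak_conv u x \<longleftrightarrow> (\<forall>z. (\<lambda>n. u n \<bullet> z) \<longlonglongrightarrow> x \<bullet> z)"

end

theory Submission
  imports Defs
begin


definition sc_on :: "'a::real_inner set \<Rightarrow> ('a \<Rightarrow> real) \<Rightarrow> real \<Rightarrow> bool" where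
"sc_on S f s \<longleftrightarrow> (\<forall>x\<in>S. \<forall>xb\<in>S. \<forall>t\<in>{0..1}. t *\<^sub>R xb + (1-t) *\<^sub>R x \<in> S \<and>
   f (t *\<^sub>R xb + (1-t) *\<^sub>R x) + s*t*(1-t)*(norm(xb-x))^2 \<le> t * f xb + (1-t) * f x)"

lemma small_eps:
  fixes c K :: real
  assumes "0 \<le> K" "\<And>t. 0 < t \<Longrightarrow> t \<le> 1 \<Longrightarrow> c \<le> t*K"
  shows "c \<le> 0"
proof (rule ccontr)
  assume "\<not> c \<le> 0"
  hence c: "c > 0" by simp
  define t where "t = min 1 (c/(2*K+1))"
  have t0: "0 < t" "t \<le> 1" using c assms(1) by (auto simp: t_def)
  have kc: "0 \<le> K*c" using c assms(1) by simp
  have "t*K \<le> (c/(2*K+1))*K" using assms(1) by (intro mult_right_mono) (auto simp: t_def)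
  also have "\<dots> < c" using c assms(1) kc by (simp add: field_simps) (metis add_pos_nonneg mult_nonneg_nonneg less_imp_le)
  finally show False using assms(2)[OF t0] by simp
qed

lemma growth:
  fixes f :: "'a::real_inner \<Rightarrow> real"
  assumes sc: "sc_on S f s" and s: "0 \<le> s" and x: "x\<in>S"
    and sub: "\<And>w. w\<in>S \<Longrightarrow> f x + \<zeta> \<bullet> (w-x) \<le> f w" and w: "w\<in>S"
  shows "f x + \<zeta> \<bullet> (w-x) + s*(norm(w-x))^2 \<le> f w"
proof -
  define d where "d = (norm(w-x))^2"
  have "\<zeta> \<bullet> (w-x) + s*d - (f w - f x) \<le> 0"
  proof (rule small_eps[where K="s*d"])
    show "0 \<le> s*d" using s by (simp add: d_def)
    fix t :: real assume t: "0 < t" "t \<le> 1"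
    define p where "p = t *\<^sub>R w + (1-t) *\<^sub>R x"
    have pS: "p\<in>S" and scp: "f p + s*t*(1-t)*d \<le> t * f w + (1-t) * f x"
      using sc x w t unfolding sc_on_def p_def d_def by auto
    have "p - x = t *\<^sub>R (w - x)" by (simp add: p_def algebra_simps)
    hence "f x + t * (\<zeta> \<bullet> (w-x)) \<le> f p" using sub[OF pS] by simp
    hence "t * (\<zeta> \<bullet> (w-x) + s*d - (f w - f x)) \<le> t * (t*(s*d))"
      using scp by (simp add: algebra_simps)
    thus "\<zeta> \<bullet> (w-x) + s*d - (f w - f x) \<le> t*(s*d)" using t by simp
  qed
  thus ?thesis by (simp add: d_def)
qed

lemma sc_on_linear:
  assumes "sc_on S f s"
  shows "sc_on S (\<lambda>w. f w - \<zeta> \<bullet> w) s"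
  unfolding sc_on_def
proof (intro ballI conjI)
  fix x xb t assume x: "x\<in>S" and xb: "xb\<in>S" and t: "t\<in>{0..(1::real)}"
  show "t *\<^sub>R xb + (1 - t) *\<^sub>R x \<in> S" using assms x xb t unfolding sc_on_def by blast
  have h: "f (t *\<^sub>R xb + (1-t) *\<^sub>R x) + s*t*(1-t)*(norm(xb-x))^2 \<le> t * f xb + (1-t) * f x"
    using assms x xb t unfolding sc_on_def by blast
  have e: "\<zeta> \<bullet> (t *\<^sub>R xb + (1-t) *\<^sub>R x) = t * (\<zeta> \<bullet> xb) + (1-t) * (\<zeta> \<bullet> x)"
    by (simp add: inner_add_right)
  show "f (t *\<^sub>R xb + (1-t) *\<^sub>R x) - \<zeta> \<bullet> (t *\<^sub>R xb + (1-t) *\<^sub>R x) + s*t*(1-t)*(norm(xb-x))^2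
     \<le> t * (f xb - \<zeta> \<bullet> xb) + (1-t) * (f x - \<zeta> \<bullet> x)"
    using h unfolding e by (simp add: algebra_simps)
qed


lemma sc_on_lin:
  assumes "sc_on S f s" and lin: "linear \<phi>"
  shows "sc_on S (\<lambda>w. f w - \<phi> w) s"
  unfolding sc_on_def
proof (intro ballI conjI)
  fix x xb t assume x: "x\<in>S" and xb: "xb\<in>S" and t: "t\<in>{0..(1::real)}"
  show "t *\<^sub>R xb + (1 - t) *\<^sub>R x \<in> S" using assms x xb t unfolding sc_on_def by blast
  have h: "f (t *\<^sub>R xb + (1-t) *\<^sub>R x) + s*t*(1-t)*(norm(xb-x))^2 \<le> t * f xb + (1-t) * f x"
    using assms x xb t unfolding sc_on_def by blast
  have e: "\<phi> (t *\<^sub>R xb + (1-t) *\<^sub>R x) = t * \<phi> xb + (1-t) * \<phi> x"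
    using lin by (simp add: linear_add linear_scale)
  show "f (t *\<^sub>R xb + (1-t) *\<^sub>R x) - \<phi> (t *\<^sub>R xb + (1-t) *\<^sub>R x) + s*t*(1-t)*(norm(xb-x))^2
     \<le> t * (f xb - \<phi> xb) + (1-t) * (f x - \<phi> x)"
    using h unfolding e by (simp add: algebra_simps)
qed

lemma inv_Suc_lim: "(\<lambda>k. 1 / real (Suc k)) \<longlonglongrightarrow> 0"
  using LIMSEQ_Suc[OF lim_inverse_n'] by simp

lemma min_exists:
  fixes f :: "'a::{real_inner,complete_space} \<Rightarrow> real"
  assumes sc: "sc_on S f s" and s: "0 < s" and ne: "S \<noteq> {}" and bdd: "\<And>w. w\<in>S \<Longrightarrow> B \<le> f w"
    and cl: "\<And>u w c. (\<And>k. u k \<in> S) \<Longrightarrow> u \<longlonglongrightarrow> w \<Longrightarrow> (\<And>k. f (u k) \<le> c + 1 / real (Suc k))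
             \<Longrightarrow> w \<in> S \<and> f w \<le> c"
  shows "\<exists>x\<in>S. \<forall>w\<in>S. f x \<le> f w"
proof -
  define m where "m = Inf (f ` S)"
  have bb: "bdd_below (f ` S)" using bdd by (rule bdd_belowI2)
  have mle: "\<And>w. w\<in>S \<Longrightarrow> m \<le> f w" unfolding m_def using bb by (simp add: cInf_lower)
  have "\<forall>k. \<exists>u\<in>S. f u < m + 1 / real (Suc k)"
  proof
    fix k
    have "m < m + 1 / real (Suc k)" by simp
    hence "Inf (f ` S) < m + 1 / real (Suc k)" by (simp add: m_def)
    then obtain v where "v \<in> f ` S" "v < m + 1 / real (Suc k)" using cInf_less_iff[OF _ bb] ne by blast
    thus "\<exists>u\<in>S. f u < m + 1 / real (Suc k)" by blast
  qed
  then obtain u where uS: "\<And>k. u k \<in> S" and uf: "\<And>k. f (u k) < m + 1 / real (Suc k)"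
    by metis
  have key: "s/4 * (norm(u i - u j))^2 \<le> (1 / real (Suc i) + 1 / real (Suc j))/2" for i j
  proof -
    define p where "p = (1/2) *\<^sub>R u i + (1 - 1/2) *\<^sub>R u j"
    have hh: "1/2 \<in> {0..(1::real)}" by simp
    have "p \<in> S \<and> f p + s*(1/2)*(1-1/2)*(norm(u i - u j))^2 \<le> (1/2) * f (u i) + (1-1/2) * f (u j)"
      unfolding p_def using sc_on_def[THEN iffD1, OF sc, rule_format, OF uS[of j] uS[of i] hh] .
    hence "p \<in> S" and h: "f p + s*(1/2)*(1-1/2)*(norm(u i - u j))^2 \<le> (1/2) * f (u i) + (1-1/2) * f (u j)"
      by auto
    hence "m \<le> f p" using mle by blast
    thus ?thesis using h uf[of i] uf[of j] by simp
  qed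
  have "Cauchy u"
  proof (rule CauchyI)
    fix e :: real assume e: "0 < e"
    obtain N :: nat where N: "4 / (s * e^2) < real N" using reals_Archimedean2 by blast
    have "\<forall>i\<ge>N. \<forall>j\<ge>N. norm (u i - u j) < e"
    proof (intro allI impI)
      fix i j assume ij: "N \<le> i" "N \<le> j"
      have a: "1 / real (Suc i) \<le> 1 / real (Suc N)" "1 / real (Suc j) \<le> 1 / real (Suc N)"
        using ij by (auto simp: field_simps)
      have "s/4 * (norm(u i - u j))^2 \<le> 1 / real (Suc N)"
      proof -
        define A where "A = 1 / real (Suc i)"
        define B where "B = 1 / real (Suc j)"
        define C where "C = 1 / real (Suc N)"
        have "s/4 * (norm(u i - u j))^2 \<le> (A + B)/2" "A \<le> C" "B \<le> C"
          using key[of i j] a unfolding A_def B_def C_def by auto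
        moreover have "(A + B)/2 \<le> C" using \<open>A \<le> C\<close> \<open>B \<le> C\<close> by simp
        ultimately show ?thesis unfolding C_def[symmetric] by linarith
      qed
      hence "s * (norm(u i - u j))^2 * real (Suc N) \<le> 4" by (simp add: field_simps)
      moreover have D: "0 < s * real (Suc N)" using s by simp
      ultimately have "(norm(u i - u j))^2 \<le> 4 / (s * real (Suc N))"
        by (subst pos_le_divide_eq[OF D]) (simp add: algebra_simps)
      also have "\<dots> < e^2"
      proof -
        have "4 / (s * e^2) < real (Suc N)" using N by simp
        hence "4 < real (Suc N) * (s * e^2)" using s e by (simp add: pos_divide_less_eq)
        thus ?thesis using D by (simp add: pos_divide_less_eq algebra_simps)
      qed
      finally show "norm (u i - u j) < e" using e by (simp add: power_less_imp_less_base)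
    qed
    thus "\<exists>M. \<forall>m\<ge>M. \<forall>n\<ge>M. norm (u m - u n) < e" by blast
  qed
  then obtain w where w: "u \<longlonglongrightarrow> w" using Cauchy_convergent convergent_def by blast
  have "w \<in> S \<and> f w \<le> m" using cl[OF uS w, of m] uf less_imp_le by blast
  thus ?thesis using mle by (meson order_trans)
qed

lemma sc_norm: "sc_on (UNIV::'a::real_inner set) (\<lambda>x. (norm x)^2 / 2) (1/2)"
  unfolding sc_on_def
proof (intro ballI conjI)
  fix x xb :: 'a and t :: real
  show "t *\<^sub>R xb + (1-t) *\<^sub>R x \<in> UNIV" by simp
  have "(norm (t *\<^sub>R xb + (1-t) *\<^sub>R x))^2 + t*(1-t)*(norm(xb-x))^2 = t * (norm xb)^2 + (1-t) * (norm x)^2"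
    by (simp add: power2_norm_eq_inner inner_add_left inner_add_right inner_diff_left inner_diff_right
         inner_commute[of x xb] algebra_simps)
  thus "(norm (t *\<^sub>R xb + (1-t) *\<^sub>R x))^2 / 2 + 1/2*t*(1-t)*(norm(xb-x))^2 \<le> t * ((norm xb)^2/2) + (1-t) * ((norm x)^2/2)"
    by (simp add: field_simps)
qed

lemma riesz:
  fixes \<phi> :: "'a::{real_inner,complete_space} \<Rightarrow> real"
  assumes bl: "bounded_linear \<phi>"
  shows "\<exists>z. \<forall>x. \<phi> x = x \<bullet> z"
proof -
  define f where "f = (\<lambda>x::'a. (norm x)^2 / 2 - \<phi> x)"
  have lin: "linear \<phi>" using bl bounded_linear.linear by blast
  have sc: "sc_on UNIV f (1/2)" unfolding f_def by (rule sc_on_lin[OF sc_norm lin])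
  obtain K where K: "\<And>x. norm (\<phi> x) \<le> norm x * K" using bounded_linear.bounded[OF bl] by blast
  have bdd: "- (K^2)/2 \<le> f w" for w
  proof -
    have "\<phi> w \<le> norm w * K" using K[of w] by simp
    moreover have "0 \<le> (norm w - K)^2" by simp
    moreover have "(norm w - K)^2 = (norm w)^2 - 2*(norm w*K) + K^2" by (simp add: power2_diff algebra_simps)
    ultimately show ?thesis unfolding f_def by linarith
  qed
  have cont: "(\<lambda>k. f (u k)) \<longlonglongrightarrow> f w" if "u \<longlonglongrightarrow> w" for u w
    unfolding f_def by (intro tendsto_intros bounded_linear.tendsto[OF bl] that) auto
  obtain z where z: "\<And>v. f z \<le> f v"
  proof -
    have "\<exists>x\<in>UNIV. \<forall>w\<in>UNIV. f x \<le> f w"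
    proof (rule min_exists[OF sc _ _ bdd])
      fix u w c assume u: "u \<longlonglongrightarrow> w" and uc: "\<And>k. f (u k) \<le> c + 1 / real (Suc k)"
      have "f w \<le> c"
      proof (rule LIMSEQ_le[OF cont[OF u]])
        show "(\<lambda>k. c + 1 / real (Suc k)) \<longlonglongrightarrow> c" using tendsto_add[OF tendsto_const inv_Suc_lim, of c] by simp
        show "\<exists>N. \<forall>n\<ge>N. f (u n) \<le> c + 1 / real (Suc n)" using uc by blast
      qed
      thus "w \<in> UNIV \<and> f w \<le> c" by simp
    qed auto
    thus ?thesis using that by blast
  qed
  have "\<phi> v = v \<bullet> z" for v
  proof -
    define a where "a = z \<bullet> v - \<phi> v"
    define c where "c = (norm v)^2 / 2"
    have c0: "0 \<le> c" by (simp add: c_def)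
    have "f (z + t *\<^sub>R v) - f z = t * a + t^2 * c" for t
    proof -
      have n: "(norm (z + t *\<^sub>R v))^2 = (norm z)^2 + 2*t*(z\<bullet>v) + t*t*(norm v)^2"
        by (simp add: power2_norm_eq_inner inner_add_left inner_add_right inner_commute[of v z] algebra_simps)
      have "f (z + t *\<^sub>R v) - f z = ((norm z)^2 + 2*t*(z\<bullet>v) + t*t*(norm v)^2)/2 - (\<phi> z + t*\<phi> v) - ((norm z)^2/2 - \<phi> z)"
        unfolding f_def n using lin by (simp add: linear_add linear_scale)
      also have "\<dots> = t * a + t^2 * c" by (simp add: a_def c_def power2_eq_square field_simps)
      finally show ?thesis .
    qed
    hence ge: "0 \<le> t * a + t^2 * c" for t using z[of "z + t *\<^sub>R v"] by (metis diff_ge_0_iff_ge)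
    have "\<bar>a\<bar> \<le> 0"
    proof (rule small_eps[OF c0])
      fix t :: real assume t: "0 < t" "t \<le> 1"
      have g1: "0 \<le> t*a + t*t*c" using ge[of t] by (simp add: power2_eq_square)
      have g2: "0 \<le> -(t*a) + t*t*c" using ge[of "-t"] by (simp add: power2_eq_square)
      have "t*\<bar>a\<bar> \<le> t*(t*c)"
        using g1 g2 by (cases "a \<ge> 0") (simp_all add: algebra_simps)
      thus "\<bar>a\<bar> \<le> t*c" using t by simp
    qed
    hence "a = 0" by simp
    thus ?thesis by (simp add: a_def inner_commute)
  qed
  thus ?thesis by blast
qed

lemma adjoint_ok:
  fixes T :: "'a::{real_inner,complete_space} \<Rightarrow> 'b::real_inner"
  assumes "bounded_linear T"
  shows "T x \<bullet> y = x \<bullet> adjoint T y"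
proof -
  have "\<forall>y. \<exists>z. \<forall>x. T x \<bullet> y = x \<bullet> z"
  proof
    fix y
    have "bounded_linear (\<lambda>x. T x \<bullet> y)"
      using bounded_linear_compose[OF bounded_linear_inner_left assms] by simp
    thus "\<exists>z. \<forall>x. T x \<bullet> y = x \<bullet> z" using riesz by blast
  qed
  then show ?thesis
    unfolding adjoint_def choice_iff
    by (intro someI2_ex[where Q="\<lambda>f'. T x \<bullet> y = x \<bullet> f' y"]) auto
qed


lemma fin_eff:
  assumes "proper_fun R" "x \<in> effdom R"
  shows "R x = ereal (real_of_ereal (R x))"
  using assms unfolding proper_fun_def effdom_def
  by (cases "R x") auto

lemma not_eff: "x \<notin> effdom R \<Longrightarrow> R x = \<infinity>"
  unfolding effdom_def by (simp add: top.not_eq_extremum)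

lemma sc_R:
  assumes pr: "proper_fun R" and sc: "strongly_convex R \<sigma>"
  shows "sc_on (effdom R) (\<lambda>x. real_of_ereal (R x)) \<sigma>"
  unfolding sc_on_def
proof (intro ballI)
  fix x xb t assume x: "x \<in> effdom R" and xb: "xb \<in> effdom R" and t: "t \<in> {0..(1::real)}"
  define p where "p = t *\<^sub>R xb + (1-t) *\<^sub>R x"
  have ex: "R x = ereal (real_of_ereal (R x))" and exb: "R xb = ereal (real_of_ereal (R xb))"
    using fin_eff[OF pr x] fin_eff[OF pr xb] .
  have h: "R p + ereal (\<sigma> * t * (1 - t) * (norm (xb - x))\<^sup>2) \<le> ereal t * R xb + ereal (1 - t) * R x"
    using sc x xb t unfolding strongly_convex_def p_def by blast
  also have "\<dots> = ereal (t * real_of_ereal (R xb) + (1-t) * real_of_ereal (R x))"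
    by (subst ex, subst exb) simp
  finally have h2: "R p + ereal (\<sigma> * t * (1 - t) * (norm (xb - x))\<^sup>2) \<le> ereal (t * real_of_ereal (R xb) + (1-t) * real_of_ereal (R x))" .
  have pinf: "R p \<noteq> \<infinity>" using h2 by auto
  have pm: "R p \<noteq> -\<infinity>" using pr unfolding proper_fun_def by auto
  have pS: "p \<in> effdom R" using pinf unfolding effdom_def by (simp add: top.not_eq_extremum)
  have ep: "R p = ereal (real_of_ereal (R p))" using fin_eff[OF pr pS] .
  have "real_of_ereal (R p) + \<sigma> * t * (1 - t) * (norm (xb - x))\<^sup>2 \<le> t * real_of_ereal (R xb) + (1-t) * real_of_ereal (R x)"
    using h2 by (subst (asm) ep) simp
  thus "t *\<^sub>R xb + (1 - t) *\<^sub>R x \<in> effdom R \<and>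
         real_of_ereal (R (t *\<^sub>R xb + (1 - t) *\<^sub>R x)) + \<sigma> * t * (1 - t) * (norm (xb - x))\<^sup>2
         \<le> t * real_of_ereal (R xb) + (1 - t) * real_of_ereal (R x)"
    using pS unfolding p_def by simp
qed

lemma grad_conj_prop:
  fixes R :: "'a::{real_inner,complete_space} \<Rightarrow> ereal"
  assumes pr: "proper_fun R" and lsc: "lsc_fun R" and s: "\<sigma> > 0" and sc: "strongly_convex R \<sigma>"
    and sub0: "\<xi>0 \<in> subdiff R x0"
  shows "grad_conj R \<zeta> \<in> effdom R \<and>
     (\<forall>w\<in>effdom R. real_of_ereal (R (grad_conj R \<zeta>)) - \<zeta> \<bullet> grad_conj R \<zeta> + \<sigma> * (norm (w - grad_conj R \<zeta>))^2
                    \<le> real_of_ereal (R w) - \<zeta> \<bullet> w)"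
proof -
  define Rr where "Rr = (\<lambda>x. real_of_ereal (R x))"
  define S where "S = effdom R"
  define f where "f = (\<lambda>w. Rr w - \<zeta> \<bullet> w)"
  have scR: "sc_on S Rr \<sigma>" unfolding S_def Rr_def by (rule sc_R[OF pr sc])
  have lin: "linear (\<lambda>w. \<zeta> \<bullet> w)" using bounded_linear_inner_right bounded_linear.linear by blast
  have scf: "sc_on S f \<sigma>" unfolding f_def by (rule sc_on_lin[OF scR lin])
  have fin: "\<And>w. w \<in> S \<Longrightarrow> R w = ereal (Rr w)" unfolding S_def Rr_def using fin_eff[OF pr] by blast
  have x0S: "x0 \<in> S" using sub0 unfolding subdiff_def S_def effdom_def by (simp add: top.not_eq_extremum)
  have sub0': "Rr x0 + \<xi>0 \<bullet> (w - x0) \<le> Rr w" if "w \<in> S" for w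
  proof -
    have "R x0 + ereal (\<xi>0 \<bullet> (w - x0)) \<le> R w" using sub0 unfolding subdiff_def by blast
    thus ?thesis using fin[OF x0S] fin[OF that] by simp
  qed
  have gr0: "Rr x0 + \<xi>0 \<bullet> (w - x0) + \<sigma> * (norm (w - x0))^2 \<le> Rr w" if "w \<in> S" for w
    using growth[OF scR _ x0S sub0' that] s by simp
  define M where "M = norm (\<xi>0 - \<zeta>)"
  have bdd: "Rr x0 - \<zeta> \<bullet> x0 - M^2 / (4*\<sigma>) \<le> f w" if w: "w \<in> S" for w
  proof -
    define d where "d = norm (w - x0)"
    have "(\<xi>0 - \<zeta>) \<bullet> (w - x0) \<ge> - (M * d)"
    proof -
      have "(\<zeta> - \<xi>0) \<bullet> (w-x0) = - ((\<xi>0 - \<zeta>) \<bullet> (w-x0))" by (simp add: inner_diff_left)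
      moreover have "norm (\<zeta> - \<xi>0) = M" by (simp add: M_def norm_minus_commute)
      hence "(\<zeta> - \<xi>0) \<bullet> (w-x0) \<le> M * d" using norm_cauchy_schwarz[of "\<zeta> - \<xi>0" "w - x0"] unfolding d_def by simp
      ultimately show ?thesis by linarith
    qed
    moreover have "0 \<le> \<sigma> * (d - M / (2*\<sigma>))^2" using s by simp
    moreover have "\<sigma> * (d - M / (2*\<sigma>))^2 = \<sigma> * d^2 - M * d + M^2/(4*\<sigma>)"
      using s by (simp add: power2_diff field_simps power2_eq_square)
    moreover have "f w = Rr w - \<zeta> \<bullet> w" by (simp add: f_def)
    moreover have "(\<xi>0 - \<zeta>) \<bullet> (w - x0) = \<xi>0 \<bullet> (w - x0) - \<zeta> \<bullet> w + \<zeta> \<bullet> x0"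
      by (simp add: inner_diff_left inner_diff_right)
    ultimately show ?thesis using gr0[OF w] unfolding d_def by linarith
  qed
  have cl: "w \<in> S \<and> f w \<le> c"
    if uS: "\<And>k. u k \<in> S" and u: "u \<longlonglongrightarrow> w" and uc: "\<And>k. f (u k) \<le> c + 1 / real (Suc k)" for u w c
  proof -
    have le: "R w \<le> ereal (c + \<zeta> \<bullet> w + e)" if e: "e > 0" for e
    proof -
      have lim: "(\<lambda>k. c + 1 / real (Suc k) + \<zeta> \<bullet> u k) \<longlonglongrightarrow> c + 0 + \<zeta> \<bullet> w"
        by (intro tendsto_intros inv_Suc_lim u)
      have ev: "eventually (\<lambda>k. c + 1 / real (Suc k) + \<zeta> \<bullet> u k < c + \<zeta> \<bullet> w + e) sequentially"
        using order_tendstoD(2)[OF lim, of "c + \<zeta> \<bullet> w + e"] e by simp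
      have ev2: "eventually (\<lambda>k. u k \<in> {z. R z \<le> ereal (c + \<zeta> \<bullet> w + e)}) sequentially"
      proof (rule eventually_mono[OF ev])
        fix k assume "c + 1 / real (Suc k) + \<zeta> \<bullet> u k < c + \<zeta> \<bullet> w + e"
        hence "Rr (u k) \<le> c + \<zeta> \<bullet> w + e" using uc[of k] unfolding f_def by simp
        thus "u k \<in> {z. R z \<le> ereal (c + \<zeta> \<bullet> w + e)}" using fin[OF uS[of k]] by simp
      qed
      have "closed {z. R z \<le> ereal (c + \<zeta> \<bullet> w + e)}" using lsc unfolding lsc_fun_def by blast
      from Lim_in_closed_set[OF this ev2 _ u] show ?thesis by simp
    qed
    have wS: "w \<in> S" using le[of 1] unfolding S_def effdom_def by auto
    have "Rr w \<le> c + \<zeta> \<bullet> w + e" if "e > 0" for e using le[OF that] fin[OF wS] by simp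
    hence "Rr w \<le> c + \<zeta> \<bullet> w" by (rule field_le_epsilon) (simp add: algebra_simps)
    thus ?thesis using wS unfolding f_def by simp
  qed
  have "\<exists>x\<in>S. \<forall>w\<in>S. f x \<le> f w"
  proof (rule min_exists[OF scf s _ bdd])
    show "S \<noteq> {}" using x0S by blast
    fix u w c assume "\<And>k. u k \<in> S" "u \<longlonglongrightarrow> w" "\<And>k. f (u k) \<le> c + 1 / real (Suc k)"
    thus "w \<in> S \<and> f w \<le> c" by (rule cl)
  qed
  then obtain xs where xsS: "xs \<in> S" and xsmin: "\<And>w. w \<in> S \<Longrightarrow> f xs \<le> f w" by blast
  have subs: "Rr xs + \<zeta> \<bullet> (w - xs) \<le> Rr w" if "w \<in> S" for w
    using xsmin[OF that] unfolding f_def by (simp add: inner_diff_right)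
  have grs: "Rr xs + \<zeta> \<bullet> (w - xs) + \<sigma> * (norm (w - xs))^2 \<le> Rr w" if "w \<in> S" for w
    using growth[OF scR _ xsS subs that] s by simp
  have "grad_conj R \<zeta> = xs"
    unfolding grad_conj_def
  proof (rule the_equality)
    show "\<forall>w. R xs - ereal (\<zeta> \<bullet> xs) \<le> R w - ereal (\<zeta> \<bullet> w)"
    proof
      fix w
      show "R xs - ereal (\<zeta> \<bullet> xs) \<le> R w - ereal (\<zeta> \<bullet> w)"
      proof (cases "w \<in> S")
        case True thus ?thesis using xsmin[OF True] fin[OF True] fin[OF xsS] unfolding f_def by simp
      next
        case False thus ?thesis using not_eff[of w R] unfolding S_def by simp
      qed
    qed
    fix x assume hx: "\<forall>w. R x - ereal (\<zeta> \<bullet> x) \<le> R w - ereal (\<zeta> \<bullet> w)"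
    have "R x - ereal (\<zeta> \<bullet> x) \<le> ereal (Rr xs - \<zeta> \<bullet> xs)" using hx[rule_format, of xs] fin[OF xsS] by simp
    hence xS: "x \<in> S" unfolding S_def effdom_def by (cases "R x") auto
    have "Rr x - \<zeta> \<bullet> x \<le> Rr xs - \<zeta> \<bullet> xs" using hx[rule_format, of xs] fin[OF xS] fin[OF xsS] by simp
    hence "\<sigma> * (norm (x - xs))^2 \<le> 0" using grs[OF xS] by (simp add: inner_diff_right)
    hence "(norm (x - xs))^2 \<le> 0" using s by (simp add: mult_le_0_iff)
    thus "x = xs" by simp
  qed
  thus ?thesis using xsS grs unfolding S_def Rr_def by (simp add: inner_diff_right algebra_simps)
qed


theorem mainTheorem6:
  fixes R :: "'a::{real_inner, complete_space} \<Rightarrow> ereal"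
    and F :: "'a \<Rightarrow> 'b::{real_inner, complete_space}"
    and domF :: "'a set" and y :: 'b
    and \<sigma> \<rho> \<eta> Lc \<mu>0 \<mu>1 :: real and \<beta> :: ereal
    and x0 \<xi>0 xbar :: 'a
    and Lop :: "'a \<Rightarrow> ('a \<Rightarrow>\<^sub>L 'b)"
    and adaptive :: bool
    and \<xi> x m :: "nat \<Rightarrow> 'a"
    and r :: "nat \<Rightarrow> 'b" and g :: "nat \<Rightarrow> 'a"
    and \<alpha> \<beta>n \<gamma> :: "nat \<Rightarrow> real"
  assumes R_proper: "proper_fun R"
    and R_lsc: "lsc_fun R"
    and \<sigma>_pos: "\<sigma> > 0"
    and R_sc: "strongly_convex R \<sigma>"
    \<comment> \<open>(b)\<close>
    and \<rho>_pos: "\<rho> > 0"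
    and \<xi>0_sub: "\<xi>0 \<in> subdiff R x0"
    and ball_dom: "cball x0 (2 * \<rho>) \<subseteq> domF"
    and xbar_dom: "xbar \<in> domF" and xbar_sol: "F xbar = y"
    and xbar_breg: "bregman R \<xi>0 xbar x0 \<le> ereal (\<sigma> * \<rho>\<^sup>2)"
    \<comment> \<open>(c)\<close>
    and weakly_closed: "\<And>u z v. (\<forall>n. u n \<in> domF) \<Longrightarrow> weak_conv u z \<Longrightarrow>
                          (\<lambda>n. F (u n)) \<longlonglongrightarrow> v \<Longrightarrow> z \<in> domF \<and> F z = v"
    \<comment> \<open>(d)\<close>
    and L_cont: "continuous_on (cball x0 (2 * \<rho>)) Lop"
    and \<eta>_range: "0 \<le> \<eta>" "\<eta> < 1"
    and tangential_cone: "\<And>z w. z \<in> cball x0 (2 * \<rho>) \<Longrightarrow> w \<in> cball x0 (2 * \<rho>) \<Longrightarrow>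
          norm (F z - F w - Lop w (z - w)) \<le> \<eta> * norm (F z - F w)"
    and Lc_pos: "Lc > 0"
    and L_bound: "\<And>z. z \<in> cball x0 (2 * \<rho>) \<Longrightarrow> norm (Lop z) \<le> Lc"
    \<comment> \<open>parameters\<close>
    and \<beta>_pos: "\<beta> > 0"
    and \<mu>0_pos: "0 < \<mu>0" and \<mu>0_bound: "\<mu>0 < 4 * \<sigma> * (1 - \<eta>)"
    and \<mu>1_pos: "\<mu>1 > 0"
    \<comment> \<open>Algorithm 2 with exact data\<close>
    and init_\<xi>: "\<xi> 0 = \<xi>0"
    and init_x: "x 0 = x0"
    and x_def: "\<And>n. x n = grad_conj R (\<xi> n)"
    and r_def: "\<And>n. r n = F (x n) - y"
    and g_def: "\<And>n. g n = adjoint (blinfun_apply (Lop (x n))) (r n)"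
    and \<alpha>_def: "\<And>n. \<alpha> n =
          (if adaptive then
             (if r n = 0 then 0
              else if g n = 0 then \<mu>1
              else min (\<mu>0 * (norm (r n))\<^sup>2 / (norm (g n))\<^sup>2) \<mu>1)
           else \<mu>0 / Lc\<^sup>2)"
    and m0: "m 0 = 0"
    and mSuc: "\<And>n. m (Suc n) = \<xi> (Suc n) - \<xi> n"
    and \<gamma>0: "\<gamma> 0 = 0"
    and \<gamma>Suc: "\<And>n. \<gamma> (Suc n) = m (Suc n) \<bullet> (x (Suc n) - x n)
                 - (1 - \<eta>) * \<alpha> n * (norm (r n))\<^sup>2 + \<beta>n n * \<gamma> n"
    and \<beta>n_def: "\<And>n. ereal (\<beta>n n) =
          (if m n = 0 then 0
           else min (ereal (max 0 ((\<alpha> n * (g n \<bullet> m n) - 2 * \<sigma> * \<gamma> n) / (norm (m n))\<^sup>2))) \<beta>)"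
    and \<xi>Suc: "\<And>n. \<xi> (Suc n) = \<xi> n - \<alpha> n *\<^sub>R g n + \<beta>n n *\<^sub>R m n"
  shows "(\<forall>n. F (x n) = y \<longrightarrow> (\<forall>k>n. x k = x n))
       \<and> (\<forall>n. \<xi> (Suc n) = \<xi> n \<longrightarrow>
              F (x n) = y \<and> (\<forall>k>n. x k = x n \<and> \<xi> k = \<xi> n))"
proof -
  define Rr where "Rr = (\<lambda>z. real_of_ereal (R z))"
  define S where "S = effdom R"
  define B where "B = cball x0 (2 * \<rho>)"
  have fin: "\<And>z. z \<in> S \<Longrightarrow> R z = ereal (Rr z)"
    using fin_eff[OF R_proper] unfolding S_def Rr_def by blast
  have gc: "x n \<in> S \<and> (\<forall>w\<in>S. Rr (x n) - \<xi> n \<bullet> x n + \<sigma> * (norm (w - x n))^2 \<le> Rr w - \<xi> n \<bullet> w)" for n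
    unfolding x_def[of n] S_def Rr_def by (rule grad_conj_prop[OF R_proper R_lsc \<sigma>_pos R_sc \<xi>0_sub])
  have xS: "\<And>n. x n \<in> S" using gc by blast
  have grow: "\<And>n w. w \<in> S \<Longrightarrow> Rr (x n) - \<xi> n \<bullet> x n + \<sigma> * (norm (w - x n))^2 \<le> Rr w - \<xi> n \<bullet> w"
    using gc by blast
  define \<Delta> where "\<Delta> n z = Rr z - Rr (x n) - \<xi> n \<bullet> (z - x n)" for n z
  have \<Delta>ge: "\<sigma> * (norm (z - x n))^2 \<le> \<Delta> n z" if "z \<in> S" for n z
    using grow[OF that, of n] unfolding \<Delta>_def by (simp add: inner_diff_right)
  have \<Delta>self: "\<Delta> n (x n) = 0" for n unfolding \<Delta>_def by simp
  have x0S: "x0 \<in> S" using xS[of 0] init_x by simp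
  have xbarS: "xbar \<in> S"
  proof (rule ccontr)
    assume "xbar \<notin> S"
    hence xi: "R xbar = \<infinity>" using not_eff[of xbar R] unfolding S_def by simp
    have "bregman R \<xi>0 xbar x0 = \<infinity>" unfolding bregman_def xi fin[OF x0S] by simp
    thus False using xbar_breg by simp
  qed
  have \<Delta>0: "\<Delta> 0 xbar \<le> \<sigma> * \<rho>^2"
    using xbar_breg unfolding bregman_def \<Delta>_def init_x init_\<xi> using fin[OF x0S] fin[OF xbarS] by simp
  have adj: "\<And>n v. Lop (x n) v \<bullet> r n = v \<bullet> g n"
    unfolding g_def by (rule adjoint_ok[OF blinfun.bounded_linear_right])
  have g0: "g n = 0" if "r n = 0" for n
  proof -
    have "g n \<bullet> g n = 0" using adj[of n "g n"] that by simp
    thus ?thesis by simp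
  qed
  have gb: "norm (g n) \<le> Lc * norm (r n)" if xb: "x n \<in> B" for n
  proof (cases "g n = 0")
    case True thus ?thesis using Lc_pos by simp
  next
    case False
    have "(norm (g n))^2 = Lop (x n) (g n) \<bullet> r n" using adj[of n "g n"] by (simp add: power2_norm_eq_inner)
    also have "\<dots> \<le> norm (Lop (x n) (g n)) * norm (r n)" by (rule norm_cauchy_schwarz)
    also have "\<dots> \<le> (norm (Lop (x n)) * norm (g n)) * norm (r n)"
      by (intro mult_right_mono norm_blinfun) simp
    also have "\<dots> \<le> (Lc * norm (g n)) * norm (r n)"
      using L_bound[OF xb[unfolded B_def]] by (intro mult_right_mono) simp_all
    finally have "norm (g n) * norm (g n) \<le> norm (g n) * (Lc * norm (r n))"
      by (simp add: power2_eq_square algebra_simps)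
    thus ?thesis using False by simp
  qed
  have \<alpha>0: "0 \<le> \<alpha> n" for n
    unfolding \<alpha>_def using \<mu>0_pos \<mu>1_pos by auto
  have \<alpha>pos: "0 < \<alpha> n" if "r n \<noteq> 0" for n
    unfolding \<alpha>_def using \<mu>0_pos \<mu>1_pos that Lc_pos by auto
  have \<alpha>g: "(\<alpha> n)^2 * (norm (g n))^2 \<le> \<alpha> n * \<mu>0 * (norm (r n))^2" if xb: "x n \<in> B" for n
  proof (cases adaptive)
    case True
    show ?thesis
    proof (cases "r n = 0 \<or> g n = 0")
      case True thus ?thesis using \<alpha>0[of n] \<mu>0_pos g0[of n] by auto
    next
      case False
      hence a: "\<alpha> n \<le> \<mu>0 * (norm (r n))\<^sup>2 / (norm (g n))\<^sup>2" using True unfolding \<alpha>_def by simp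
      have gp: "0 < (norm (g n))^2" using False by simp
      have "\<alpha> n * (norm (g n))^2 \<le> \<mu>0 * (norm (r n))\<^sup>2" using a gp by (simp add: pos_le_divide_eq)
      hence "\<alpha> n * (\<alpha> n * (norm (g n))^2) \<le> \<alpha> n * (\<mu>0 * (norm (r n))\<^sup>2)"
        using \<alpha>0[of n] by (rule mult_left_mono)
      thus ?thesis by (simp add: power2_eq_square algebra_simps)
    qed
  next
    case False
    hence a: "\<alpha> n = \<mu>0 / Lc^2" unfolding \<alpha>_def by simp
    have "(norm (g n))^2 \<le> (Lc * norm (r n))^2"
      using gb[OF xb] by (intro power_mono) simp_all
    hence "\<alpha> n * (\<alpha> n * (norm (g n))^2) \<le> \<alpha> n * (\<alpha> n * (Lc * norm (r n))^2)"
      using \<alpha>0[of n] by (intro mult_left_mono) simp_all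
    also have "\<alpha> n * (Lc * norm (r n))^2 = \<mu>0 * (norm (r n))^2" using a Lc_pos by (simp add: power_mult_distrib)
    finally show ?thesis by (simp add: power2_eq_square algebra_simps)
  qed
  have \<beta>0: "0 \<le> \<beta>n n" for n
  proof -
    have b0: "ereal 0 \<le> \<beta>" using \<beta>_pos unfolding zero_ereal_def[symmetric] by simp
    have "ereal 0 \<le> ereal (\<beta>n n)" unfolding \<beta>n_def using b0 by auto
    thus ?thesis by simp
  qed
  have \<beta>m: "\<beta>n n = 0" if "m n = 0" for n
    using \<beta>n_def[of n] that by (simp add: zero_ereal_def)
  have \<beta>q: "\<beta>n n \<le> max 0 ((\<alpha> n * (g n \<bullet> m n) - 2 * \<sigma> * \<gamma> n) / (norm (m n))\<^sup>2)" if "m n \<noteq> 0" for n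
  proof -
    have "ereal (\<beta>n n) \<le> ereal (max 0 ((\<alpha> n * (g n \<bullet> m n) - 2 * \<sigma> * \<gamma> n) / (norm (m n))\<^sup>2))"
      unfolding \<beta>n_def using that by simp
    thus ?thesis by (subst (asm) ereal_less_eq(3))
  qed
  have \<beta>key: "(\<beta>n n)^2 * (norm (m n))^2 - 2 * \<alpha> n * \<beta>n n * (g n \<bullet> m n) + 4 * \<sigma> * \<beta>n n * \<gamma> n \<le> 0" for n
  proof (cases "m n = 0 \<or> \<beta>n n = 0")
    case True thus ?thesis using \<beta>m[of n] by auto
  next
    case False
    hence mn: "m n \<noteq> 0" and bp: "0 < \<beta>n n" using \<beta>0[of n] by auto
    have mp: "0 < (norm (m n))^2" using mn by simp
    define q where "q = (\<alpha> n * (g n \<bullet> m n) - 2 * \<sigma> * \<gamma> n) / (norm (m n))\<^sup>2"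
    have "\<beta>n n \<le> q" using \<beta>q[OF mn] bp unfolding q_def by (simp add: max_def split: if_splits)
    hence A: "\<beta>n n * (norm (m n))^2 \<le> \<alpha> n * (g n \<bullet> m n) - 2 * \<sigma> * \<gamma> n"
      using mp unfolding q_def by (simp add: pos_le_divide_eq)
    have A0: "0 \<le> \<beta>n n * (norm (m n))^2" using bp by simp
    have "\<beta>n n * (norm (m n))^2 - 2 * (\<alpha> n * (g n \<bullet> m n)) + 4 * (\<sigma> * \<gamma> n) \<le> 0"
      using A A0 by linarith
    hence "\<beta>n n * (\<beta>n n * (norm (m n))^2 - 2 * (\<alpha> n * (g n \<bullet> m n)) + 4 * (\<sigma> * \<gamma> n)) \<le> 0"
      using bp by (simp add: mult_nonneg_nonpos)
    thus ?thesis by (simp add: power2_eq_square algebra_simps)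
  qed
  have tang: "(1 - \<eta>) * (norm (r n))^2 \<le> g n \<bullet> (x n - z)"
    if xb: "x n \<in> B" and zb: "z \<in> B" and Fz: "F z = y" for n z
  proof -
    define v where "v = Lop (x n) (x n - z)"
    have e1: "g n \<bullet> (x n - z) = v \<bullet> r n" unfolding v_def using adj[of n "x n - z"] by (simp add: inner_commute)
    have "norm (F z - F (x n) - Lop (x n) (z - x n)) \<le> \<eta> * norm (F z - F (x n))"
      using tangential_cone zb xb unfolding B_def by blast
    moreover have "F z - F (x n) - Lop (x n) (z - x n) = v - r n"
      unfolding v_def r_def Fz by (simp add: blinfun.diff_right algebra_simps)
    moreover have "norm (F z - F (x n)) = norm (r n)" unfolding r_def Fz by (simp add: norm_minus_commute)
    ultimately have nv: "norm (v - r n) \<le> \<eta> * norm (r n)" by simp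
    have "v \<bullet> r n = r n \<bullet> r n + (v - r n) \<bullet> r n" by (simp add: inner_diff_left)
    moreover have "- ((v - r n) \<bullet> r n) \<le> norm (v - r n) * norm (r n)"
    proof -
      have "(r n - v) \<bullet> r n \<le> norm (r n - v) * norm (r n)" by (rule norm_cauchy_schwarz)
      moreover have "(r n - v) \<bullet> r n = - ((v - r n) \<bullet> r n)" by (simp add: inner_diff_left)
      moreover have "norm (r n - v) = norm (v - r n)" by (rule norm_minus_commute)
      ultimately show ?thesis by simp
    qed
    moreover have "norm (v - r n) * norm (r n) \<le> \<eta> * norm (r n) * norm (r n)"
      using nv by (intro mult_right_mono) simp_all
    moreover have "r n \<bullet> r n = (norm (r n))^2" by (simp add: power2_norm_eq_inner)
    ultimately have "(norm (r n))^2 - \<eta> * norm (r n) * norm (r n) \<le> v \<bullet> r n" by linarith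
    thus ?thesis unfolding e1 by (simp add: power2_eq_square algebra_simps)
  qed
  have \<gamma>lem: "\<forall>n. (\<forall>k<n. x k \<in> B) \<longrightarrow> m n \<bullet> (x n - z) \<le> \<gamma> n"
    if zb: "z \<in> B" and Fz: "F z = y" for z
  proof
    fix n show "(\<forall>k<n. x k \<in> B) \<longrightarrow> m n \<bullet> (x n - z) \<le> \<gamma> n"
    proof (induction n)
      case 0 show ?case using m0 \<gamma>0 by simp
    next
      case (Suc n)
      show ?case
      proof
        assume h: "\<forall>k<Suc n. x k \<in> B"
        hence xb: "x n \<in> B" and IH: "m n \<bullet> (x n - z) \<le> \<gamma> n" using Suc by auto
        have split: "m (Suc n) \<bullet> (x (Suc n) - z) = m (Suc n) \<bullet> (x (Suc n) - x n) + (\<xi> (Suc n) - \<xi> n) \<bullet> (x n - z)"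
          unfolding mSuc by (simp add: inner_diff_right)
        have d: "\<xi> (Suc n) - \<xi> n = \<beta>n n *\<^sub>R m n - \<alpha> n *\<^sub>R g n" using \<xi>Suc[of n] by (simp add: algebra_simps)
        have e2: "(\<xi> (Suc n) - \<xi> n) \<bullet> (x n - z) = \<beta>n n * (m n \<bullet> (x n - z)) - \<alpha> n * (g n \<bullet> (x n - z))"
          unfolding d by (simp add: inner_diff_left)
        have t1: "\<alpha> n * ((1 - \<eta>) * (norm (r n))^2) \<le> \<alpha> n * (g n \<bullet> (x n - z))"
          using tang[OF xb zb Fz] \<alpha>0[of n] by (rule mult_left_mono)
        have t2: "\<beta>n n * (m n \<bullet> (x n - z)) \<le> \<beta>n n * \<gamma> n"
          using IH \<beta>0[of n] by (rule mult_left_mono)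
        have "\<gamma> (Suc n) = m (Suc n) \<bullet> (x (Suc n) - x n) - \<alpha> n * ((1 - \<eta>) * (norm (r n))^2) + \<beta>n n * \<gamma> n"
          using \<gamma>Suc[of n] by (simp add: algebra_simps)
        thus "m (Suc n) \<bullet> (x (Suc n) - z) \<le> \<gamma> (Suc n)" using split e2 t1 t2 by linarith
      qed
    qed
  qed
  define c where "c = (1 - \<eta>) - \<mu>0 / (4 * \<sigma>)"
  have c_pos: "0 < c" unfolding c_def using \<mu>0_bound \<sigma>_pos by (simp add: field_simps)
  have descent: "\<Delta> (Suc n) z \<le> \<Delta> n z - c * \<alpha> n * (norm (r n))^2"
    if zb: "z \<in> B" and zS: "z \<in> S" and Fz: "F z = y" and xs: "\<forall>k\<le>n. x k \<in> B" for n z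
  proof -
    have xb: "x n \<in> B" using xs by simp
    define \<delta> where "\<delta> = \<xi> (Suc n) - \<xi> n"
    have d: "\<delta> = \<beta>n n *\<^sub>R m n - \<alpha> n *\<^sub>R g n" unfolding \<delta>_def using \<xi>Suc[of n] by (simp add: algebra_simps)
    define e where "e = norm (x (Suc n) - x n)"
    define D where "D = Rr (x n) - Rr (x (Suc n)) - \<xi> (Suc n) \<bullet> (x n - x (Suc n))"
    define E where "E = \<delta> \<bullet> (x n - z)"
    define N where "N = (norm \<delta>)^2"
    have eq1: "\<Delta> (Suc n) z - \<Delta> n z = D + E"
      unfolding \<Delta>_def D_def E_def \<delta>_def by (simp add: inner_diff_left inner_diff_right algebra_simps)
    have gr: "Rr (x n) - \<xi> n \<bullet> x n + \<sigma> * e^2 \<le> Rr (x (Suc n)) - \<xi> n \<bullet> x (Suc n)"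
      using grow[OF xS[of "Suc n"], of n] unfolding e_def .
    have "\<delta> \<bullet> (x (Suc n) - x n) = \<xi> (Suc n) \<bullet> (x (Suc n) - x n) - \<xi> n \<bullet> x (Suc n) + \<xi> n \<bullet> x n"
      unfolding \<delta>_def by (simp add: inner_diff_left inner_diff_right)
    moreover have "\<xi> (Suc n) \<bullet> (x n - x (Suc n)) = - (\<xi> (Suc n) \<bullet> (x (Suc n) - x n))"
      by (simp add: inner_diff_right)
    ultimately have D1: "D \<le> \<delta> \<bullet> (x (Suc n) - x n) - \<sigma> * e^2" using gr unfolding D_def by linarith
    have cs: "\<delta> \<bullet> (x (Suc n) - x n) \<le> norm \<delta> * e" unfolding e_def by (rule norm_cauchy_schwarz)
    have sq: "0 \<le> (norm \<delta> - 2 * \<sigma> * e)^2" by simp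
    have sq2: "(norm \<delta> - 2 * \<sigma> * e)^2 = N - 4 * \<sigma> * (norm \<delta> * e) + 4 * \<sigma> * (\<sigma> * e^2)"
      unfolding N_def by (simp add: power2_diff power2_eq_square algebra_simps)
    have D2: "D \<le> norm \<delta> * e - \<sigma> * e^2" using D1 cs by linarith
    have a1: "4 * \<sigma> * D \<le> 4 * \<sigma> * (norm \<delta> * e - \<sigma> * e^2)"
      by (rule mult_left_mono[OF D2]) (use \<sigma>_pos in simp)
    have a2: "4 * \<sigma> * (norm \<delta> * e - \<sigma> * e^2) = 4 * \<sigma> * (norm \<delta> * e) - 4 * \<sigma> * (\<sigma> * e^2)"
      by (simp only: right_diff_distrib)
    have D3: "4 * \<sigma> * D \<le> N" using a1 a2 sq sq2 by linarith
    have e2: "E = \<beta>n n * (m n \<bullet> (x n - z)) - \<alpha> n * (g n \<bullet> (x n - z))"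
      unfolding E_def d by (simp add: inner_diff_left)
    have t1: "\<alpha> n * ((1 - \<eta>) * (norm (r n))^2) \<le> \<alpha> n * (g n \<bullet> (x n - z))"
      using tang[OF xb zb Fz] \<alpha>0[of n] by (rule mult_left_mono)
    have IH: "m n \<bullet> (x n - z) \<le> \<gamma> n" using \<gamma>lem[OF zb Fz] xs by auto
    have t2: "\<beta>n n * (m n \<bullet> (x n - z)) \<le> \<beta>n n * \<gamma> n"
      using IH \<beta>0[of n] by (rule mult_left_mono)
    have E1: "E \<le> \<beta>n n * \<gamma> n - \<alpha> n * ((1 - \<eta>) * (norm (r n))^2)" using e2 t1 t2 by linarith
    have N1: "N = (\<beta>n n)^2 * (norm (m n))^2 - 2 * \<alpha> n * \<beta>n n * (g n \<bullet> m n) + (\<alpha> n)^2 * (norm (g n))^2"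
    proof -
      have "N = (\<beta>n n *\<^sub>R m n - \<alpha> n *\<^sub>R g n) \<bullet> (\<beta>n n *\<^sub>R m n - \<alpha> n *\<^sub>R g n)"
        unfolding N_def d by (simp only: power2_norm_eq_inner)
      also have "\<dots> = \<beta>n n * \<beta>n n * (m n \<bullet> m n) - 2 * \<alpha> n * \<beta>n n * (g n \<bullet> m n) + \<alpha> n * \<alpha> n * (g n \<bullet> g n)"
        by (simp add: inner_diff_left inner_diff_right inner_commute[of "m n" "g n"] algebra_simps)
      also have "\<dots> = (\<beta>n n)^2 * (norm (m n))^2 - 2 * \<alpha> n * \<beta>n n * (g n \<bullet> m n) + (\<alpha> n)^2 * (norm (g n))^2"
        by (simp add: power2_norm_eq_inner[symmetric] power2_eq_square)
      finally show ?thesis .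
    qed
    have N2: "N \<le> \<alpha> n * \<mu>0 * (norm (r n))^2 - 4 * \<sigma> * (\<beta>n n * \<gamma> n)"
      using N1 \<beta>key[of n] \<alpha>g[OF xb] by (simp add: algebra_simps)
    have E2: "4 * \<sigma> * E \<le> 4 * \<sigma> * (\<beta>n n * \<gamma> n - \<alpha> n * ((1 - \<eta>) * (norm (r n))^2))"
      by (rule mult_left_mono[OF E1]) (use \<sigma>_pos in simp)
    have "4 * \<sigma> * (\<Delta> (Suc n) z - \<Delta> n z) = 4 * \<sigma> * D + 4 * \<sigma> * E" using eq1 by (simp add: algebra_simps)
    also have "\<dots> \<le> N + 4 * \<sigma> * (\<beta>n n * \<gamma> n - \<alpha> n * ((1 - \<eta>) * (norm (r n))^2))"
      using D3 E2 by linarith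
    also have "\<dots> \<le> \<alpha> n * \<mu>0 * (norm (r n))^2 - 4 * \<sigma> * (\<alpha> n * ((1 - \<eta>) * (norm (r n))^2))"
      using N2 by (simp add: algebra_simps)
    also have "\<dots> = 4 * \<sigma> * (- c * \<alpha> n * (norm (r n))^2)"
      unfolding c_def using \<sigma>_pos by (simp add: field_simps)
    finally have "4 * \<sigma> * (\<Delta> (Suc n) z - \<Delta> n z) \<le> 4 * \<sigma> * (- c * \<alpha> n * (norm (r n))^2)" .
    hence "\<Delta> (Suc n) z - \<Delta> n z \<le> - c * \<alpha> n * (norm (r n))^2"
      by (rule mult_left_le_imp_le) (use \<sigma>_pos in simp)
    thus ?thesis by simp
  qed
  have dec_nonneg: "0 \<le> c * \<alpha> n * (norm (r n))^2" for n using c_pos \<alpha>0[of n] by simp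
  have bxb: "norm (xbar - x0) \<le> \<rho>"
  proof -
    have "\<sigma> * (norm (xbar - x0))^2 \<le> \<sigma> * \<rho>^2" using \<Delta>ge[OF xbarS, of 0] \<Delta>0 unfolding init_x by linarith
    hence "(norm (xbar - x0))^2 \<le> \<rho>^2" by (rule mult_left_le_imp_le) (rule \<sigma>_pos)
    thus ?thesis by (rule power2_le_imp_le) (use \<rho>_pos in simp_all)
  qed
  have xbarB: "xbar \<in> B"
  proof -
    have "dist x0 xbar = norm (xbar - x0)" unfolding dist_norm by (rule norm_minus_commute)
    thus ?thesis unfolding B_def mem_cball using bxb \<rho>_pos by linarith
  qed
  have ball_of: "x k \<in> B" if "\<Delta> k xbar \<le> \<sigma> * \<rho>^2" for k
  proof -
    have "\<sigma> * (norm (xbar - x k))^2 \<le> \<sigma> * \<rho>^2" using \<Delta>ge[OF xbarS, of k] that by linarith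
    hence "(norm (xbar - x k))^2 \<le> \<rho>^2" by (rule mult_left_le_imp_le) (rule \<sigma>_pos)
    hence "norm (xbar - x k) \<le> \<rho>" by (rule power2_le_imp_le) (use \<rho>_pos in simp_all)
    moreover have "norm (x0 - x k) \<le> norm (x0 - xbar) + norm (xbar - x k)" using norm_triangle_ineq[of "x0 - xbar" "xbar - x k"] by simp
    moreover have "norm (x0 - xbar) = norm (xbar - x0)" by (rule norm_minus_commute)
    ultimately have "norm (x0 - x k) \<le> 2 * \<rho>" using bxb by linarith
    thus ?thesis unfolding B_def mem_cball dist_norm .
  qed
  have inv: "\<forall>k\<le>n. x k \<in> B \<and> \<Delta> k xbar \<le> \<sigma> * \<rho>^2" for n
  proof (induction n)
    case 0 thus ?case using \<Delta>0 ball_of by auto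
  next
    case (Suc n)
    have "\<Delta> (Suc n) xbar \<le> \<Delta> n xbar - c * \<alpha> n * (norm (r n))^2"
      using descent[OF xbarB xbarS xbar_sol] Suc by auto
    hence "\<Delta> (Suc n) xbar \<le> \<sigma> * \<rho>^2" using Suc dec_nonneg[of n] by auto
    thus ?case using Suc ball_of by (auto simp: le_Suc_eq)
  qed
  have inB: "\<And>n. x n \<in> B" using inv by blast
  have inBall: "\<And>n. \<forall>k\<le>n. x k \<in> B" using inB by blast
  have partI: "\<forall>k>n. x k = x n" if Fn: "F (x n) = y" for n
  proof -
    have xj: "x (n + j) = x n" for j
    proof (induction j)
      case 0 thus ?case by simp
    next
      case (Suc j)
      define z where "z = x (n + j)"
      have Fz: "F z = y" using Suc Fn unfolding z_def by simp
      have zB: "z \<in> B" unfolding z_def by (rule inB)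
      have zS: "z \<in> S" unfolding z_def by (rule xS)
      have "\<Delta> (Suc (n + j)) z \<le> \<Delta> (n + j) z - c * \<alpha> (n + j) * (norm (r (n + j)))^2"
        by (rule descent[OF zB zS Fz inBall])
      hence "\<Delta> (Suc (n + j)) z \<le> 0" using \<Delta>self[of "n + j"] dec_nonneg[of "n + j"] unfolding z_def by simp
      hence "\<sigma> * (norm (z - x (Suc (n + j))))^2 \<le> 0" using \<Delta>ge[OF zS, of "Suc (n + j)"] by linarith
      hence "(norm (z - x (Suc (n + j))))^2 \<le> 0" using \<sigma>_pos by (simp add: mult_le_0_iff)
      hence "x (Suc (n + j)) = z" by simp
      thus ?case using Suc unfolding z_def by simp
    qed
    show ?thesis
    proof (intro allI impI)
      fix k assume "n < k"
      thus "x k = x n" using xj[of "k - n"] by simp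
    qed
  qed
  have partII: "F (x n) = y \<and> (\<forall>k>n. x k = x n \<and> \<xi> k = \<xi> n)" if h: "\<xi> (Suc n) = \<xi> n" for n
  proof -
    have xe: "x (Suc n) = x n" using h x_def by simp
    have "\<Delta> (Suc n) xbar = \<Delta> n xbar" unfolding \<Delta>_def xe h ..
    hence "c * \<alpha> n * (norm (r n))^2 \<le> 0" using descent[OF xbarB xbarS xbar_sol inBall[of n]] by simp
    hence "c * (\<alpha> n * (norm (r n))^2) \<le> c * 0" by (simp add: mult.assoc)
    hence "\<alpha> n * (norm (r n))^2 \<le> 0" by (rule mult_left_le_imp_le) (rule c_pos)
    hence rn: "r n = 0" using \<alpha>pos[of n] by (cases "r n = 0") (auto simp: mult_le_0_iff)
    hence Fn: "F (x n) = y" using r_def by simp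
    have "\<xi> (n + j) = \<xi> n \<and> \<xi> (n + Suc j) = \<xi> n" for j
    proof (induction j)
      case 0 thus ?case using h by simp
    next
      case (Suc j)
      define k where "k = n + Suc j"
      have xk: "x k = x n" using Suc x_def unfolding k_def by simp
      have rk: "r k = 0" using r_def xk rn by simp
      have gk: "g k = 0" using g0[OF rk] .
      have mk: "m k = 0" unfolding k_def using Suc by (simp add: mSuc)
      have bk: "\<beta>n k = 0" using \<beta>m[OF mk] .
      have "\<xi> (Suc k) = \<xi> k" using \<xi>Suc[of k] gk mk by simp
      thus ?case using Suc unfolding k_def by simp
    qed
    hence xi: "\<xi> (n + j) = \<xi> n" for j by blast
    have "\<forall>k>n. x k = x n \<and> \<xi> k = \<xi> n"
    proof (intro allI impI)
      fix k assume "n < k"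
      hence "\<xi> k = \<xi> n" using xi[of "k - n"] by simp
      thus "x k = x n \<and> \<xi> k = \<xi> n" using x_def by simp
    qed
    thus ?thesis using Fn by blast
  qed
  show ?thesis using partI partII by blast
qed

end
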